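(* Let $d\ge 1$, let $\Lambda$ be a $(d-2)$-dimensional simplicial complex with vertex set $[n]$, and let $\Gamma=0*\Lambda$ be the cone over $\Lambda$ with a new apex vertex $0$. Let $p':[n]\to\mathbb{R}^{d-1}$ be such that the coordinates $\{p'(s)_t:s\in[n],t\in[d-1]\}$ are algebraically independent over $\mathbb{Q}$, and set $\mathbb{F}'=\mathbb{Q}(p'(s)_t:s\in[n],t\in[d-1])$. Let $a_1,\dots,a_n\in\mathbb{R}$ be algebraically independent over $\mathbb{F}'$, and let $\mathbb{F}\subseteq\mathbb{R}$ be any field containing $\mathbb{F}'(a_1,\dots,a_n)$. Define $p:\{0,1,\dots,n\}\to\mathbb{F}^d$ by $p(0)=(0,\dots,0,-1)$ and $p(s)=((1+a_s)p'(s),a_s)$ for $s\in[n]$. Then for all $0\le i\le d-1$ there exists an $\mathbb{F}'$-linear map $\psi_i:\mathcal{S}^\ell_i(\Lambda,p';\mathbb{F}')\to\mathcal{S}^\ell_i(\Gamma,p;\mathbb{F})$ such that: (1) for every $\omega'\in\mathcal{S}^\ell_i(\Lambda,p';\mathbb{F}')$, $\mathrm{supp}(\psi_i(\omega'))=\mathrm{skel}_{i-1}(0*\mathrm{supp}(\omega'))$; and (2) with $c'=\sum_{j=1}^n x_j$ and $c=\sum_{j=0}^n x_j$, $\psi_{i-1}(\partial_{c'}\omega')=\partial_c(\psi_i(\omega'))$ for all $\omega'\in\mathcal{S}^\ell_i(\Lambda,p';\mathbb{F}')$ (for $1\le i\le d-1$).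
   Context: Simplicial complexes are nonempty families of subsets of a finite vertex set closed under subsets and containing all singletons; an $i$-face has $i+1$ elements. The cone $0*\Lambda=\{\sigma,\sigma\cup\{0\}:\sigma\in\Lambda\}$. $\mathrm{skel}_m(K)$ is the subcomplex of faces of dimension $\le m$. For a complex $K$ with vertex set $W$, a field $\mathbb{K}\subseteq\mathbb{R}$ and a map $r:W\to\mathbb{K}^e$ where $e-1=\dim K$, set $\theta_t=\sum_{v\in W}r(v)_tx_v\in\mathbb{K}[x_v:v\in W]$ for $t\in[e]$, and for a linear form $\ell=\sum_v\ell_vx_v$ let $\partial_\ell=\sum_v\ell_v\,\partial/\partial x_v$. A linear $i$-stress on $(K,r;\mathbb{K})$ is a homogeneous degree-$i$ polynomial $\lambda\in\mathbb{K}[x_v]$ such that every monomial with nonzero coefficient has support (set of variables dividing it) a face of $K$, and $\partial_{\theta_t}\lambda=0$ for all $t\in[e]$; these form the $\mathbb{K}$-vector space $\mathcal{S}^\ell_i(K,r;\mathbb{K})$. For a stress $\lambda$ of degree $i$ and an $(i-1)$-face $\sigma$, $\lambda_\sigma$ is the coefficient of $\prod_{v\in\sigma}x_v$, and $\mathrm{supp}(\lambda)$ is the subcomplex generated by all $(i-1)$-faces $\sigma$ with $\lambda_\sigma\neq0$. *)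

theory Defs
  imports Complex_Main
begin

definition simplicial_complex :: "nat set \<Rightarrow> nat set set \<Rightarrow> bool" where
  "simplicial_complex V K \<longleftrightarrow> finite V \<and> K \<noteq> {} \<and> K \<subseteq> Pow V \<and>
     (\<forall>\<sigma>\<in>K. \<forall>\<tau>. \<tau> \<subseteq> \<sigma> \<longrightarrow> \<tau> \<in> K) \<and> (\<forall>v\<in>V. {v} \<in> K)"

text \<open>dim K + 1 (maximal number of vertices of a face).\<close>
definition cdim1 :: "nat set set \<Rightarrow> nat" where
  "cdim1 K = Max (card ` K)"

definition cone0 :: "nat set set \<Rightarrow> nat set set" where
  "cone0 L = L \<union> {insert 0 \<sigma> | \<sigma>. \<sigma> \<in> L}"

definition skel :: "int \<Rightarrow> nat set set \<Rightarrow> nat set set" where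
  "skel m K = {\<sigma>\<in>K. int (card \<sigma>) \<le> m + 1}"

definition is_subfield :: "real set \<Rightarrow> bool" where
  "is_subfield F \<longleftrightarrow> 0 \<in> F \<and> 1 \<in> F \<and> (\<forall>x\<in>F. \<forall>y\<in>F. x + y \<in> F \<and> x * y \<in> F) \<and>
     (\<forall>x\<in>F. - x \<in> F \<and> inverse x \<in> F)"

definition field_gen :: "real set \<Rightarrow> real set" where
  "field_gen S = \<Inter>{F. is_subfield F \<and> S \<subseteq> F}"

definition alg_indep :: "real set \<Rightarrow> 'i set \<Rightarrow> ('i \<Rightarrow> real) \<Rightarrow> bool" where
  "alg_indep K I x \<longleftrightarrow>
     (\<forall>c :: ('i \<Rightarrow> nat) \<Rightarrow> real.
        finite {m. c m \<noteq> 0} \<and> (\<forall>m. c m \<noteq> 0 \<longrightarrow> c m \<in> K \<and> (\<forall>j. j \<notin> I \<longrightarrow> m j = 0)) \<and>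
        (\<Sum>m\<in>{m. c m \<noteq> 0}. c m * (\<Prod>j\<in>I. x j ^ m j)) = 0
        \<longrightarrow> (\<forall>m. c m = 0))"

text \<open>Polynomials in variables x_v (v :: nat) are represented by their coefficient
  functions on monomials (exponent vectors nat \<Rightarrow> nat).\<close>
type_synonym poly_r = "(nat \<Rightarrow> nat) \<Rightarrow> real"

definition mon_supp :: "(nat \<Rightarrow> nat) \<Rightarrow> nat set" where
  "mon_supp m = {v. m v \<noteq> 0}"

definition mon_deg :: "(nat \<Rightarrow> nat) \<Rightarrow> nat" where
  "mon_deg m = (\<Sum>v\<in>mon_supp m. m v)"

text \<open>Derivation along the linear form sum_{v in W} l v * x_v.\<close>
definition pderiv_lin :: "nat set \<Rightarrow> (nat \<Rightarrow> real) \<Rightarrow> poly_r \<Rightarrow> poly_r" where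
  "pderiv_lin W l f = (\<lambda>m. \<Sum>v\<in>W. l v * real (Suc (m v)) * f (m(v := Suc (m v))))"

text \<open>Linear i-stresses on (K, r; Fld): r v t is the t-th coordinate (t in 1..e) of r(v),
  where e - 1 = dim K and the vertex set of K is the union of its faces.\<close>
definition lin_stresses :: "nat set set \<Rightarrow> (nat \<Rightarrow> nat \<Rightarrow> real) \<Rightarrow> real set \<Rightarrow> nat \<Rightarrow> poly_r set" where
  "lin_stresses K r Fld i = {f.
     (\<forall>m. f m \<in> Fld) \<and>
     (\<forall>m. f m \<noteq> 0 \<longrightarrow> mon_supp m \<in> K \<and> mon_deg m = i) \<and>
     (\<forall>t\<in>{1..cdim1 K}. pderiv_lin (\<Union>K) (\<lambda>v. r v t) f = (\<lambda>_. 0))}"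

definition sqfree :: "nat set \<Rightarrow> nat \<Rightarrow> nat" where
  "sqfree \<sigma> = (\<lambda>v. if v \<in> \<sigma> then 1 else 0)"

definition stress_supp :: "nat \<Rightarrow> poly_r \<Rightarrow> nat set set" where
  "stress_supp i f = {\<tau>. \<exists>\<sigma>. finite \<sigma> \<and> card \<sigma> = i \<and> f (sqfree \<sigma>) \<noteq> 0 \<and> \<tau> \<subseteq> \<sigma>}"

end

theory Submission
  imports Defs "Jordan_Normal_Form.Determinant"
begin


lemma pderiv_lin_commute:
  assumes "finite W" "finite W'"
  shows "pderiv_lin W l (pderiv_lin W' l' f) = pderiv_lin W' l' (pderiv_lin W l f)"
proof
  fix m
  have "pderiv_lin W l (pderiv_lin W' l' f) m =
    (\<Sum>v\<in>W. \<Sum>u\<in>W'. l v * real (Suc (m v)) * (l' u * real (Suc ((m(v := Suc (m v))) u)) *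
        f ((m(v := Suc (m v)))(u := Suc ((m(v := Suc (m v))) u)))))"
    by (simp add: pderiv_lin_def sum_distrib_left)
  also have "\<dots> = (\<Sum>u\<in>W'. \<Sum>v\<in>W. l v * real (Suc (m v)) * (l' u * real (Suc ((m(v := Suc (m v))) u)) *
        f ((m(v := Suc (m v)))(u := Suc ((m(v := Suc (m v))) u)))))"
    by (rule sum.swap)
  also have "\<dots> = (\<Sum>u\<in>W'. \<Sum>v\<in>W. l' u * real (Suc (m u)) * (l v * real (Suc ((m(u := Suc (m u))) v)) *
        f ((m(u := Suc (m u)))(v := Suc ((m(u := Suc (m u))) v)))))"
  proof (intro sum.cong refl)
    fix u v
    show "l v * real (Suc (m v)) * (l' u * real (Suc ((m(v := Suc (m v))) u)) *
        f ((m(v := Suc (m v)))(u := Suc ((m(v := Suc (m v))) u)))) =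
      l' u * real (Suc (m u)) * (l v * real (Suc ((m(u := Suc (m u))) v)) *
        f ((m(u := Suc (m u)))(v := Suc ((m(u := Suc (m u))) v))))"
      by (cases "u = v") (auto simp: fun_upd_twist algebra_simps)
  qed
  also have "\<dots> = pderiv_lin W' l' (pderiv_lin W l f) m"
    by (simp add: pderiv_lin_def sum_distrib_left)
  finally show "pderiv_lin W l (pderiv_lin W' l' f) m = pderiv_lin W' l' (pderiv_lin W l f) m" .
qed

lemma pderiv_lin_pow_commute:
  assumes "finite W" "finite W'"
  shows "pderiv_lin W l ((pderiv_lin W' l' ^^ k) f) = (pderiv_lin W' l' ^^ k) (pderiv_lin W l f)"
  by (induction k) (auto simp: pderiv_lin_commute[OF assms])

lemma pderiv_lin_add:
  "pderiv_lin W l (\<lambda>m. f m + g m) = (\<lambda>m. pderiv_lin W l f m + pderiv_lin W l g m)"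
  by (auto simp: pderiv_lin_def algebra_simps sum.distrib)

lemma pderiv_lin_smult:
  "pderiv_lin W l (\<lambda>m. c * f m) = (\<lambda>m. c * pderiv_lin W l f m)"
  by (auto simp: pderiv_lin_def algebra_simps sum_distrib_left)

lemma pderiv_lin_zero: "pderiv_lin W l (\<lambda>_. 0) = (\<lambda>_. 0)"
  by (auto simp: pderiv_lin_def)

lemma pderiv_lin_pow_add:
  "(pderiv_lin W l ^^ k) (\<lambda>m. f m + g m) = (\<lambda>m. (pderiv_lin W l ^^ k) f m + (pderiv_lin W l ^^ k) g m)"
  by (induction k) (auto simp: pderiv_lin_add)

lemma pderiv_lin_pow_smult:
  "(pderiv_lin W l ^^ k) (\<lambda>m. c * f m) = (\<lambda>m. c * (pderiv_lin W l ^^ k) f m)"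
  by (induction k) (auto simp: pderiv_lin_smult)

lemma pderiv_lin_pow_zero: "(pderiv_lin W l ^^ k) (\<lambda>_. 0) = (\<lambda>_. 0)"
  by (induction k) (auto simp: pderiv_lin_zero)

lemma pderiv_lin_addl:
  "pderiv_lin W l1 f m + pderiv_lin W l2 f m = pderiv_lin W (\<lambda>v. l1 v + l2 v) f m"
  by (auto simp: pderiv_lin_def algebra_simps sum.distrib)

lemma pderiv_lin_cong:
  "(\<And>v. v \<in> W \<Longrightarrow> l v = l' v) \<Longrightarrow> pderiv_lin W l f = pderiv_lin W l' f"
  unfolding pderiv_lin_def by (auto intro!: sum.cong)

lemma mon_deg_sum:
  assumes "finite A" "mon_supp m \<subseteq> A"
  shows "mon_deg m = (\<Sum>v\<in>A. m v)"
  unfolding mon_deg_def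
  by (rule sum.mono_neutral_left) (use assms in \<open>auto simp: mon_supp_def\<close>)

lemma mon_supp_upd: "mon_supp (m(v := Suc (m v))) = insert v (mon_supp m)"
  by (auto simp: mon_supp_def)

lemma mon_deg_upd:
  assumes "finite (mon_supp m)"
  shows "mon_deg (m(v := Suc (m v))) = Suc (mon_deg m)"
proof -
  let ?A = "insert v (mon_supp m)"
  have fA: "finite ?A" using assms by simp
  have "mon_deg (m(v := Suc (m v))) = (\<Sum>u\<in>?A. (m(v := Suc (m v))) u)"
    by (rule mon_deg_sum[OF fA]) (simp add: mon_supp_upd)
  also have "\<dots> = (\<Sum>u\<in>?A. m u + (if u = v then 1 else 0))"
    by (rule sum.cong) auto
  also have "\<dots> = (\<Sum>u\<in>?A. m u) + 1"
    using fA by (simp add: sum.distrib)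
  also have "(\<Sum>u\<in>?A. m u) = mon_deg m"
    by (rule mon_deg_sum[symmetric, OF fA]) auto
  finally show ?thesis by (metis Suc_eq_plus1)
qed

definition supp_in :: "nat set set \<Rightarrow> nat \<Rightarrow> poly_r \<Rightarrow> bool" where
  "supp_in K j f \<longleftrightarrow> (\<forall>m. f m \<noteq> 0 \<longrightarrow> mon_supp m \<in> K \<and> mon_deg m = j)"

definition downcl :: "nat set set \<Rightarrow> bool" where
  "downcl K \<longleftrightarrow> (\<forall>\<sigma>\<in>K. finite \<sigma> \<and> (\<forall>\<tau>. \<tau> \<subseteq> \<sigma> \<longrightarrow> \<tau> \<in> K))"

lemma supp_in_pderiv:
  assumes K: "downcl K" and f: "supp_in K j f"
  shows "supp_in K (j - 1) (pderiv_lin W l f) \<and> (j = 0 \<longrightarrow> pderiv_lin W l f = (\<lambda>_. 0))"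
proof -
  have key: "mon_supp m \<in> K \<and> Suc (mon_deg m) = j" if "pderiv_lin W l f m \<noteq> 0" for m
  proof -
    have "\<exists>v\<in>W. l v * real (Suc (m v)) * f (m(v := Suc (m v))) \<noteq> 0"
    proof (rule ccontr)
      assume "\<not> ?thesis"
      then have "pderiv_lin W l f m = 0" unfolding pderiv_lin_def by (intro sum.neutral) blast
      then show False using that by simp
    qed
    then obtain v where "v \<in> W" "l v * real (Suc (m v)) * f (m(v := Suc (m v))) \<noteq> 0" by blast
    then have fv: "f (m(v := Suc (m v))) \<noteq> 0" by auto
    then have h: "mon_supp (m(v := Suc (m v))) \<in> K" "mon_deg (m(v := Suc (m v))) = j"
      using f unfolding supp_in_def by auto
    then have "finite (insert v (mon_supp m))" using K unfolding downcl_def mon_supp_upd by blast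
    then have fin: "finite (mon_supp m)" by simp
    have "mon_supp m \<in> K" using h(1) K unfolding downcl_def mon_supp_upd by blast
    then show ?thesis using h(2) mon_deg_upd[OF fin, of v] by simp
  qed
  show ?thesis
  proof
    show "supp_in K (j - 1) (pderiv_lin W l f)" unfolding supp_in_def
    proof (intro allI impI)
      fix m assume "pderiv_lin W l f m \<noteq> 0"
      from key[OF this] show "mon_supp m \<in> K \<and> mon_deg m = j - 1" by auto
    qed
    show "j = 0 \<longrightarrow> pderiv_lin W l f = (\<lambda>_. 0)"
    proof
      assume j: "j = 0"
      show "pderiv_lin W l f = (\<lambda>_. 0)"
      proof
        fix m show "pderiv_lin W l f m = 0"
        proof (rule ccontr)
          assume "pderiv_lin W l f m \<noteq> 0"
          from key[OF this] j show False by simp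
        qed
      qed
    qed
  qed
qed

lemma supp_in_pow:
  assumes K: "downcl K" and f: "supp_in K j f"
  shows "supp_in K (j - k) ((pderiv_lin W l ^^ k) f) \<and> (j < k \<longrightarrow> (pderiv_lin W l ^^ k) f = (\<lambda>_. 0))"
proof (induction k)
  case 0 then show ?case using f by simp
next
  case (Suc k)
  have "supp_in K (j - k - 1) (pderiv_lin W l ((pderiv_lin W l ^^ k) f))"
    and z: "j - k = 0 \<longrightarrow> pderiv_lin W l ((pderiv_lin W l ^^ k) f) = (\<lambda>_. 0)"
    using supp_in_pderiv[OF K conjunct1[OF Suc.IH]] by auto
  moreover have "j < Suc k \<longrightarrow> (pderiv_lin W l ^^ Suc k) f = (\<lambda>_. 0)"
  proof
    assume "j < Suc k"
    then show "(pderiv_lin W l ^^ Suc k) f = (\<lambda>_. 0)"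
      using z Suc.IH by (cases "j < k") (auto simp: pderiv_lin_zero)
  qed
  ultimately show ?case by (simp add: diff_diff_add)
qed



lemma subfield_sum: "is_subfield K \<Longrightarrow> (\<And>x. x \<in> A \<Longrightarrow> f x \<in> K) \<Longrightarrow> sum f A \<in> K"
proof (induction A rule: infinite_finite_induct)
  case (infinite A) then show ?case by (simp add: is_subfield_def)
next
  case empty then show ?case by (simp add: is_subfield_def)
next
  case (insert x F) then show ?case by (simp add: is_subfield_def)
qed

lemma subfield_prod: "is_subfield K \<Longrightarrow> (\<And>x. x \<in> A \<Longrightarrow> f x \<in> K) \<Longrightarrow> prod f A \<in> K"
proof (induction A rule: infinite_finite_induct)
  case (infinite A) then show ?case by (simp add: is_subfield_def)
next
  case empty then show ?case by (simp add: is_subfield_def)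
next
  case (insert x F) then show ?case by (simp add: is_subfield_def)
qed

lemma subfield_nat: "is_subfield K \<Longrightarrow> real k \<in> K"
  by (induction k) (auto simp: is_subfield_def)

lemma subfield_power: "is_subfield K \<Longrightarrow> x \<in> K \<Longrightarrow> x ^ k \<in> K"
  by (induction k) (auto simp: is_subfield_def)

lemma subfield_mult: "is_subfield K \<Longrightarrow> x \<in> K \<Longrightarrow> y \<in> K \<Longrightarrow> x * y \<in> K"
  by (auto simp: is_subfield_def)

lemma subfield_add: "is_subfield K \<Longrightarrow> x \<in> K \<Longrightarrow> y \<in> K \<Longrightarrow> x + y \<in> K"
  by (auto simp: is_subfield_def)

lemma subfield_inverse: "is_subfield K \<Longrightarrow> x \<in> K \<Longrightarrow> inverse x \<in> K"
  by (auto simp: is_subfield_def)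

lemma subfield_divide: "is_subfield K \<Longrightarrow> x \<in> K \<Longrightarrow> y \<in> K \<Longrightarrow> x / y \<in> K"
  by (auto simp: is_subfield_def divide_inverse)

lemma subfield_one: "is_subfield K \<Longrightarrow> 1 \<in> K"
  by (auto simp: is_subfield_def)

lemma subfield_zero: "is_subfield K \<Longrightarrow> 0 \<in> K"
  by (auto simp: is_subfield_def)

lemma field_gen_subfield: "is_subfield (field_gen S)"
  unfolding field_gen_def is_subfield_def by auto

lemma field_gen_sup: "S \<subseteq> field_gen S"
  unfolding field_gen_def by auto

lemma field_gen_least: "is_subfield F \<Longrightarrow> S \<subseteq> F \<Longrightarrow> field_gen S \<subseteq> F"
  unfolding field_gen_def by auto

lemma pderiv_lin_in_field:
  assumes "is_subfield K" "\<And>m. g m \<in> K" "\<And>s. s \<in> W \<Longrightarrow> l s \<in> K"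
  shows "pderiv_lin W l g m \<in> K"
  unfolding pderiv_lin_def
  by (rule subfield_sum[OF assms(1)]) (intro subfield_mult subfield_nat assms; simp)

lemma pderiv_lin_pow_in_field:
  assumes "is_subfield K" "\<And>m. g m \<in> K" "\<And>s. s \<in> W \<Longrightarrow> l s \<in> K"
  shows "(pderiv_lin W l ^^ k) g m \<in> K"
  using assms(2) by (induction k arbitrary: m) (auto intro!: pderiv_lin_in_field assms(1,3))

lemma sqfree_inj: "sqfree A = sqfree B \<Longrightarrow> A = B"
  unfolding sqfree_def by (metis (full_types) one_neq_zero subsetI subset_antisym)

lemma prod_sqfree:
  assumes "finite N" "B \<subseteq> N"
  shows "(\<Prod>j\<in>N. (x j :: real) ^ sqfree B j) = (\<Prod>j\<in>B. x j)"
proof -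
  have "(\<Prod>j\<in>N. x j ^ sqfree B j) = (\<Prod>j\<in>N. if j \<in> B then x j else 1)"
    by (rule prod.cong) (auto simp: sqfree_def)
  also have "\<dots> = (\<Prod>j\<in>N \<inter> B. x j)" using prod.inter_restrict[OF assms(1)] by metis
  also have "N \<inter> B = B" using assms(2) by auto
  finally show ?thesis .
qed

lemma mon_supp_sqfree: "mon_supp (sqfree B) = B"
  by (auto simp: mon_supp_def sqfree_def)

section \<open>Algebraic independence consequences\<close>

lemma one_plus_a:
  fixes a :: "nat \<Rightarrow> real" and N :: "nat set"
  assumes ai: "alg_indep K N a" and K: "is_subfield K" and fin: "finite N" and s: "s \<in> N"
  shows "1 + a s \<noteq> 0"
proof
  assume h: "1 + a s = 0"
  define z :: "nat \<Rightarrow> nat" where "z = (\<lambda>_. 0)"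
  have zs: "z \<noteq> sqfree {s}"
  proof
    assume "z = sqfree {s}"
    then have "z s = sqfree {s} s" by simp
    then show False by (simp add: z_def sqfree_def)
  qed
  define C :: "(nat \<Rightarrow> nat) \<Rightarrow> real" where "C = (\<lambda>m. if m = z \<or> m = sqfree {s} then 1 else 0)"
  have supp: "{m. C m \<noteq> 0} = {z, sqfree {s}}" unfolding C_def by auto
  have "(\<Sum>m\<in>{m. C m \<noteq> 0}. C m * (\<Prod>j\<in>N. a j ^ m j)) = 1 + a s"
    unfolding supp using zs prod_sqfree[OF fin, of "{s}" a] s by (simp add: C_def z_def)
  then have sum0: "(\<Sum>m\<in>{m. C m \<noteq> 0}. C m * (\<Prod>j\<in>N. a j ^ m j)) = 0" using h by simp
  have hyp: "\<forall>m. C m \<noteq> 0 \<longrightarrow> C m \<in> K \<and> (\<forall>j. j \<notin> N \<longrightarrow> m j = 0)"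
  proof (intro allI impI)
    fix m assume "C m \<noteq> 0"
    then have m: "m = z \<or> m = sqfree {s}" unfolding C_def by (simp split: if_splits)
    then have "C m \<in> K" unfolding C_def using subfield_one[OF K] by auto
    moreover have "\<forall>j. j \<notin> N \<longrightarrow> m j = 0" using m s by (auto simp: z_def sqfree_def)
    ultimately show "C m \<in> K \<and> (\<forall>j. j \<notin> N \<longrightarrow> m j = 0)" by simp
  qed
  have finC: "finite {m. C m \<noteq> 0}" unfolding supp by simp
  have AI: "\<forall>c. finite {m. c m \<noteq> 0} \<and> (\<forall>m. c m \<noteq> 0 \<longrightarrow> c m \<in> K \<and> (\<forall>j. j \<notin> N \<longrightarrow> m j = 0)) \<and>
        (\<Sum>m\<in>{m. c m \<noteq> 0}. c m * (\<Prod>j\<in>N. a j ^ m j)) = 0 \<longrightarrow> (\<forall>m. c m = 0)"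
    using ai unfolding alg_indep_def .
  have "C z = 0" by (rule AI[rule_format]) (intro conjI finC hyp sum0)
  then show False unfolding C_def by simp
qed

lemma a_indep:
  fixes a c :: "nat \<Rightarrow> real" and N :: "nat set"
  assumes ai: "alg_indep K N a" and K: "is_subfield K" and fin: "finite N"
    and cK: "\<forall>s\<in>N. c s \<in> K" and a1: "\<forall>s\<in>N. 1 + a s \<noteq> 0"
    and eq: "(\<Sum>s\<in>N. c s * (a s / (1 + a s))) = 0"
  shows "\<forall>s\<in>N. c s = 0"
proof -
  define P where "P = (\<Prod>r\<in>N. 1 + a r)"
  have e1: "(\<Sum>s\<in>N. c s * a s * (\<Prod>r\<in>N-{s}. 1 + a r)) = 0"
  proof -
    have "(\<Sum>s\<in>N. c s * a s * (\<Prod>r\<in>N-{s}. 1 + a r)) = (\<Sum>s\<in>N. c s * (a s / (1 + a s))) * P"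
      unfolding sum_distrib_right
    proof (rule sum.cong[OF refl])
      fix s assume s: "s \<in> N"
      have "P = (1 + a s) * (\<Prod>r\<in>N-{s}. 1 + a r)" unfolding P_def using prod.remove[OF fin s] by simp
      then show "c s * a s * (\<Prod>r\<in>N-{s}. 1 + a r) = c s * (a s / (1 + a s)) * P"
        using a1 s by (simp add: field_simps)
    qed
    then show ?thesis using eq by simp
  qed
  have e2: "\<And>s. s \<in> N \<Longrightarrow> c s * a s * (\<Prod>r\<in>N-{s}. 1 + a r) =
      (\<Sum>B\<in>{B\<in>Pow N. s \<in> B}. c s * (\<Prod>r\<in>B. a r))"
  proof -
    fix s assume s: "s \<in> N"
    have "(\<Prod>r\<in>N-{s}. 1 + a r) = (\<Prod>r\<in>N-{s}. a r + 1)" by (simp add: add.commute)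
    also have "\<dots> = (\<Sum>B\<in>Pow (N-{s}). (\<Prod>r\<in>B. a r))"
      using prod_add[of "N-{s}" a "\<lambda>_. 1"] fin by simp
    finally have "c s * a s * (\<Prod>r\<in>N-{s}. 1 + a r) = (\<Sum>B\<in>Pow (N-{s}). c s * (a s * (\<Prod>r\<in>B. a r)))"
      by (simp add: sum_distrib_left mult.assoc)
    also have "\<dots> = (\<Sum>B\<in>Pow (N-{s}). c s * (\<Prod>r\<in>insert s B. a r))"
    proof (rule sum.cong[OF refl])
      fix B assume "B \<in> Pow (N - {s})"
      then have "finite B" "s \<notin> B" using finite_subset[OF _ fin] by auto
      then show "c s * (a s * (\<Prod>r\<in>B. a r)) = c s * (\<Prod>r\<in>insert s B. a r)" by simp
    qed
    also have "\<dots> = (\<Sum>B\<in>{B\<in>Pow N. s \<in> B}. c s * (\<Prod>r\<in>B. a r))"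
    proof (rule sym, rule sum.reindex_cong[where l = "insert s"])
      show "inj_on (insert s) (Pow (N - {s}))" by (auto simp: inj_on_def)
      show "{B\<in>Pow N. s \<in> B} = insert s ` Pow (N - {s})"
      proof
        show "{B\<in>Pow N. s \<in> B} \<subseteq> insert s ` Pow (N - {s})"
        proof
          fix B assume "B \<in> {B\<in>Pow N. s \<in> B}"
          then have "B = insert s (B - {s})" "B - {s} \<in> Pow (N - {s})" by auto
          then show "B \<in> insert s ` Pow (N - {s})" by blast
        qed
        show "insert s ` Pow (N - {s}) \<subseteq> {B\<in>Pow N. s \<in> B}" using s by auto
      qed
    qed simp
    finally show "c s * a s * (\<Prod>r\<in>N-{s}. 1 + a r) = (\<Sum>B\<in>{B\<in>Pow N. s \<in> B}. c s * (\<Prod>r\<in>B. a r))" .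
  qed
  have e3: "(\<Sum>B\<in>Pow N. (\<Sum>s\<in>B. c s) * (\<Prod>r\<in>B. a r)) = 0"
  proof -
    have "(\<Sum>B\<in>Pow N. (\<Sum>s\<in>B. c s) * (\<Prod>r\<in>B. a r)) =
        (\<Sum>B\<in>Pow N. \<Sum>s\<in>N. if s \<in> B then c s * (\<Prod>r\<in>B. a r) else 0)"
    proof (rule sum.cong[OF refl])
      fix B assume B: "B \<in> Pow N"
      have "(\<Sum>s\<in>N. if s \<in> B then c s * (\<Prod>r\<in>B. a r) else 0) = (\<Sum>s\<in>N \<inter> B. c s * (\<Prod>r\<in>B. a r))"
        using sum.inter_restrict[OF fin] by metis
      also have "N \<inter> B = B" using B by auto
      finally show "(\<Sum>s\<in>B. c s) * (\<Prod>r\<in>B. a r) = (\<Sum>s\<in>N. if s \<in> B then c s * (\<Prod>r\<in>B. a r) else 0)"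
        by (simp add: sum_distrib_right)
    qed
    also have "\<dots> = (\<Sum>s\<in>N. \<Sum>B\<in>Pow N. if s \<in> B then c s * (\<Prod>r\<in>B. a r) else 0)"
      by (rule sum.swap)
    also have "\<dots> = (\<Sum>s\<in>N. \<Sum>B\<in>{B\<in>Pow N. s \<in> B}. c s * (\<Prod>r\<in>B. a r))"
      by (rule sum.cong[OF refl], rule sum.inter_filter[symmetric]) (simp add: fin)
    also have "\<dots> = (\<Sum>s\<in>N. c s * a s * (\<Prod>r\<in>N-{s}. 1 + a r))"
      using e2 by simp
    finally show ?thesis using e1 by simp
  qed
  define C where "C = (\<lambda>m. \<Sum>B\<in>Pow N. if m = sqfree B then (\<Sum>s\<in>B. c s) else 0)"
  have CB: "\<And>B. B \<in> Pow N \<Longrightarrow> C (sqfree B) = (\<Sum>s\<in>B. c s)"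
  proof -
    fix B assume B: "B \<in> Pow N"
    have "C (sqfree B) = (\<Sum>B'\<in>Pow N. if B' = B then (\<Sum>s\<in>B'. c s) else 0)"
      unfolding C_def by (rule sum.cong) (auto dest: sqfree_inj)
    then show "C (sqfree B) = (\<Sum>s\<in>B. c s)" using B fin by simp
  qed
  have Csub: "{m. C m \<noteq> 0} \<subseteq> sqfree ` Pow N"
  proof
    fix m assume "m \<in> {m. C m \<noteq> 0}"
    then have "C m \<noteq> 0" by simp
    have "\<exists>B\<in>Pow N. (if m = sqfree B then (\<Sum>s\<in>B. c s) else 0) \<noteq> 0"
    proof (rule ccontr)
      assume "\<not> ?thesis"
      then have "C m = 0" unfolding C_def by (intro sum.neutral) blast
      then show False using \<open>C m \<noteq> 0\<close> by simp
    qed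
    then obtain B where "B \<in> Pow N" "(if m = sqfree B then (\<Sum>s\<in>B. c s) else 0) \<noteq> 0" by blast
    then show "m \<in> sqfree ` Pow N" by (auto split: if_splits)
  qed
  have finS: "finite (sqfree ` Pow N)" using fin by simp
  have injS: "inj_on sqfree (Pow N)" by (auto simp: inj_on_def dest: sqfree_inj)
  have "(\<Sum>m\<in>{m. C m \<noteq> 0}. C m * (\<Prod>j\<in>N. a j ^ m j)) = (\<Sum>m\<in>sqfree ` Pow N. C m * (\<Prod>j\<in>N. a j ^ m j))"
    by (rule sum.mono_neutral_left[OF finS Csub]) simp
  also have "\<dots> = (\<Sum>B\<in>Pow N. C (sqfree B) * (\<Prod>j\<in>N. a j ^ sqfree B j))"
    by (rule sum.reindex[OF injS, unfolded comp_def])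
  also have "\<dots> = (\<Sum>B\<in>Pow N. (\<Sum>s\<in>B. c s) * (\<Prod>r\<in>B. a r))"
    by (rule sum.cong) (auto simp: CB prod_sqfree[OF fin])
  finally have sum0: "(\<Sum>m\<in>{m. C m \<noteq> 0}. C m * (\<Prod>j\<in>N. a j ^ m j)) = 0" using e3 by simp
  have hyp: "\<forall>m. C m \<noteq> 0 \<longrightarrow> C m \<in> K \<and> (\<forall>j. j \<notin> N \<longrightarrow> m j = 0)"
  proof (intro allI impI)
    fix m assume "C m \<noteq> 0"
    then obtain B where B: "B \<in> Pow N" "m = sqfree B" using Csub by blast
    have "C m \<in> K" unfolding B(2) CB[OF B(1)] using B(1) cK by (auto intro!: subfield_sum[OF K])
    moreover have "\<forall>j. j \<notin> N \<longrightarrow> m j = 0" using B by (auto simp: sqfree_def)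
    ultimately show "C m \<in> K \<and> (\<forall>j. j \<notin> N \<longrightarrow> m j = 0)" by simp
  qed
  have finC: "finite {m. C m \<noteq> 0}" using finite_subset[OF Csub finS] .
  have AI: "\<forall>c. finite {m. c m \<noteq> 0} \<and> (\<forall>m. c m \<noteq> 0 \<longrightarrow> c m \<in> K \<and> (\<forall>j. j \<notin> N \<longrightarrow> m j = 0)) \<and>
        (\<Sum>m\<in>{m. c m \<noteq> 0}. c m * (\<Prod>j\<in>N. a j ^ m j)) = 0 \<longrightarrow> (\<forall>m. c m = 0)"
    using ai unfolding alg_indep_def .
  have C0: "C m = 0" for m by (rule AI[rule_format]) (intro conjI finC hyp sum0)
  show ?thesis
  proof
    fix s assume s: "s \<in> N"
    have "C (sqfree {s}) = c s" using CB[of "{s}"] s by simp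
    then show "c s = 0" using C0 by simp
  qed
qed



lemma lin_indep_faces:
  fixes p' :: "nat \<Rightarrow> nat \<Rightarrow> real" and c :: "nat \<Rightarrow> real"
  assumes ai: "alg_indep \<rat> ({1..n} \<times> {1..e}) (\<lambda>(s, t). p' s t)"
    and rho: "\<rho> \<subseteq> {1..n}" "card \<rho> \<le> e"
    and eq: "\<forall>t\<in>{1..e}. (\<Sum>u\<in>\<rho>. c u * p' u t) = 0"
  shows "\<forall>u\<in>\<rho>. c u = 0"
proof (rule ccontr)
  assume "\<not> ?thesis" then obtain u0 where u0: "u0 \<in> \<rho>" "c u0 \<noteq> 0" by auto
  have fin: "finite \<rho>" using finite_subset[OF rho(1)] by auto
  define k where "k = card \<rho>"
  define vs where "vs = sorted_list_of_set \<rho>"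
  have vs: "distinct vs" "set vs = \<rho>" "length vs = k" using fin by (auto simp: vs_def k_def)
  have vsn: "\<And>j. j < k \<Longrightarrow> vs ! j \<in> \<rho>" using vs by auto
  have injvs: "inj_on (\<lambda>j. vs ! j) {0..<k}" using vs by (auto simp: inj_on_def nth_eq_iff_index_eq)
  have imvs: "(\<lambda>j. vs ! j) ` {0..<k} = \<rho>" using vs by (auto simp: in_set_conv_nth)
  have sumvs: "\<And>f. (\<Sum>j\<in>{0..<k}. f (vs ! j)) = (\<Sum>u\<in>\<rho>. f u)"
    using sum.reindex[OF injvs] imvs by (metis (no_types, lifting) comp_apply sum.cong)
  define A :: "real mat" where "A = mat k k (\<lambda>(i,j). p' (vs!j) (Suc i))"
  have A: "A \<in> carrier_mat k k" by (simp add: A_def)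
  define v where "v = vec k (\<lambda>j. c (vs!j))"
  have Av: "A *\<^sub>v v = 0\<^sub>v k"
  proof (rule eq_vecI)
    fix i assume i: "i < dim_vec (0\<^sub>v k :: real vec)"
    then have ik: "i < k" by simp
    have "(A *\<^sub>v v) $ i = (\<Sum>j\<in>{0..<k}. p' (vs!j) (Suc i) * c (vs!j))"
      using ik by (simp add: A_def v_def scalar_prod_def)
    also have "\<dots> = (\<Sum>u\<in>\<rho>. c u * p' u (Suc i))"
      using sumvs[of "\<lambda>u. p' u (Suc i) * c u"] by (simp add: mult.commute)
    also have "\<dots> = 0" using eq ik rho(2) unfolding k_def by auto
    finally show "(A *\<^sub>v v) $ i = (0\<^sub>v k :: real vec) $ i" using ik by simp
  qed (simp add: A_def)
  obtain j0 where j0: "j0 < k" "vs ! j0 = u0" using u0 vs by (metis in_set_conv_nth)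
  have "v \<noteq> 0\<^sub>v k"
  proof
    assume "v = 0\<^sub>v k"
    then have "v $ j0 = 0" using j0 by simp
    then show False using j0 u0 by (simp add: v_def)
  qed
  moreover have "v \<in> carrier_vec k" by (simp add: v_def)
  ultimately have det0: "det A = 0" using det_0_iff_vec_prod_zero[OF A] Av by blast
  define P where "P = {\<pi>. \<pi> permutes {0..<k}}"
  have finP: "finite P" unfolding P_def by (simp add: finite_permutations)
  have Pk: "\<And>\<pi> i. \<pi> \<in> P \<Longrightarrow> i < k \<Longrightarrow> \<pi> i < k"
    unfolding P_def using permutes_in_image by fastforce
  have Pout: "\<And>\<pi> i. \<pi> \<in> P \<Longrightarrow> i \<ge> k \<Longrightarrow> \<pi> i = i"
    unfolding P_def using permutes_not_in by fastforce
  define I where "I = {1..n} \<times> {1..e}"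
  define x where "x = (\<lambda>(s, t). p' s t)"
  define G where "G = (\<lambda>\<pi>. (\<lambda>i. (vs ! (\<pi> i), Suc i)) ` {0..<k})"
  define M where "M = (\<lambda>\<pi>. \<lambda>j::nat\<times>nat. if j \<in> G \<pi> then (1::nat) else 0)"
  have GI: "\<And>\<pi>. \<pi> \<in> P \<Longrightarrow> G \<pi> \<subseteq> I"
    using Pk vsn rho unfolding G_def I_def k_def by fastforce
  have injM: "inj_on M P"
  proof (rule inj_onI)
    fix \<pi> \<pi>' assume h: "\<pi> \<in> P" "\<pi>' \<in> P" "M \<pi> = M \<pi>'"
    show "\<pi> = \<pi>'"
    proof
      fix i show "\<pi> i = \<pi>' i"
      proof (cases "i < k")
        case True
        have "(vs ! (\<pi> i), Suc i) \<in> G \<pi>" using True unfolding G_def by auto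
        then have "M \<pi> (vs ! (\<pi> i), Suc i) = 1" unfolding M_def by simp
        then have "M \<pi>' (vs ! (\<pi> i), Suc i) = 1" using h(3) by simp
        then have "(vs ! (\<pi> i), Suc i) \<in> G \<pi>'" unfolding M_def by (simp split: if_splits)
        then have "vs ! (\<pi> i) = vs ! (\<pi>' i)" unfolding G_def by auto
        then show ?thesis using Pk[OF h(1) True] Pk[OF h(2) True] vs by (simp add: nth_eq_iff_index_eq)
      next
        case False then have "k \<le> i" by simp
        then show ?thesis using Pout[OF h(1)] Pout[OF h(2)] by simp
      qed
    qed
  qed
  define C where "C = (\<lambda>m. \<Sum>\<pi>\<in>P. if m = M \<pi> then (of_int (sign \<pi>) :: real) else 0)"
  have CM: "\<And>\<pi>. \<pi> \<in> P \<Longrightarrow> C (M \<pi>) = of_int (sign \<pi>)"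
  proof -
    fix \<pi> assume h: "\<pi> \<in> P"
    have "C (M \<pi>) = (\<Sum>\<pi>'\<in>P. if \<pi>' = \<pi> then (of_int (sign \<pi>') :: real) else 0)"
      unfolding C_def by (rule sum.cong) (use injM h in \<open>auto dest: inj_onD\<close>)
    then show "C (M \<pi>) = of_int (sign \<pi>)" using h finP by simp
  qed
  have sgn0: "\<And>\<pi>. (of_int (sign \<pi>) :: real) \<noteq> 0" by (simp add: sign_def)
  have Csupp: "{m. C m \<noteq> 0} = M ` P"
  proof
    show "{m. C m \<noteq> 0} \<subseteq> M ` P"
    proof
      fix m assume "m \<in> {m. C m \<noteq> 0}"
      then have "C m \<noteq> 0" by simp
      have "\<exists>\<pi>\<in>P. (if m = M \<pi> then (of_int (sign \<pi>) :: real) else 0) \<noteq> 0"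
      proof (rule ccontr)
        assume "\<not> ?thesis"
        then have "C m = 0" unfolding C_def by (intro sum.neutral) blast
        then show False using \<open>C m \<noteq> 0\<close> by simp
      qed
      then obtain \<pi> where "\<pi> \<in> P" "(if m = M \<pi> then (of_int (sign \<pi>) :: real) else 0) \<noteq> 0" by blast
      then show "m \<in> M ` P" by (auto split: if_splits)
    qed
    show "M ` P \<subseteq> {m. C m \<noteq> 0}" using CM sgn0 by auto
  qed
  have monom: "\<And>\<pi>. \<pi> \<in> P \<Longrightarrow> (\<Prod>j\<in>I. x j ^ M \<pi> j) = (\<Prod>i\<in>{0..<k}. A $$ (i, \<pi> i))"
  proof -
    fix \<pi> assume h: "\<pi> \<in> P"
    have finI: "finite I" unfolding I_def by simp
    have "(\<Prod>j\<in>I. x j ^ M \<pi> j) = (\<Prod>j\<in>G \<pi>. x j ^ M \<pi> j)"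
      by (rule prod.mono_neutral_right[OF finI GI[OF h]]) (auto simp: M_def)
    also have "\<dots> = (\<Prod>j\<in>G \<pi>. x j)" by (rule prod.cong) (auto simp: M_def)
    also have "\<dots> = (\<Prod>i\<in>{0..<k}. x (vs ! (\<pi> i), Suc i))"
      unfolding G_def by (rule prod.reindex_cong[where l = "\<lambda>i. (vs ! (\<pi> i), Suc i)"]) (auto simp: inj_on_def)
    also have "\<dots> = (\<Prod>i\<in>{0..<k}. A $$ (i, \<pi> i))"
      by (rule prod.cong) (use Pk[OF h] in \<open>auto simp: A_def x_def\<close>)
    finally show "(\<Prod>j\<in>I. x j ^ M \<pi> j) = (\<Prod>i\<in>{0..<k}. A $$ (i, \<pi> i))" .
  qed
  have "(\<Sum>m\<in>{m. C m \<noteq> 0}. C m * (\<Prod>j\<in>I. x j ^ m j)) = (\<Sum>\<pi>\<in>P. C (M \<pi>) * (\<Prod>j\<in>I. x j ^ M \<pi> j))"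
    unfolding Csupp by (rule sum.reindex[OF injM, unfolded comp_def])
  also have "\<dots> = (\<Sum>\<pi>\<in>P. of_int (sign \<pi>) * (\<Prod>i\<in>{0..<k}. A $$ (i, \<pi> i)))"
    by (rule sum.cong) (auto simp: CM monom)
  also have "\<dots> = det A" unfolding det_def'[OF A] P_def ..
  finally have sum0: "(\<Sum>m\<in>{m. C m \<noteq> 0}. C m * (\<Prod>j\<in>I. x j ^ m j)) = 0" using det0 by simp
  have hyp: "\<forall>m. C m \<noteq> 0 \<longrightarrow> C m \<in> \<rat> \<and> (\<forall>j. j \<notin> I \<longrightarrow> m j = 0)"
  proof (intro allI impI)
    fix m assume "C m \<noteq> 0"
    then obtain \<pi> where \<pi>: "\<pi> \<in> P" "m = M \<pi>" using Csupp by blast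
    have "C m \<in> \<rat>" using CM[OF \<pi>(1)] \<pi>(2) by simp
    moreover have "\<forall>j. j \<notin> I \<longrightarrow> m j = 0" using GI[OF \<pi>(1)] \<pi>(2) by (auto simp: M_def)
    ultimately show "C m \<in> \<rat> \<and> (\<forall>j. j \<notin> I \<longrightarrow> m j = 0)" by simp
  qed
  have finC: "finite {m. C m \<noteq> 0}" unfolding Csupp using finP by simp
  have AI: "\<forall>c. finite {m. c m \<noteq> 0} \<and> (\<forall>m. c m \<noteq> 0 \<longrightarrow> c m \<in> \<rat> \<and> (\<forall>j. j \<notin> I \<longrightarrow> m j = 0)) \<and>
        (\<Sum>m\<in>{m. c m \<noteq> 0}. c m * (\<Prod>j\<in>I. x j ^ m j)) = 0 \<longrightarrow> (\<forall>m. c m = 0)"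
    using ai unfolding alg_indep_def I_def x_def .
  have "\<forall>m. C m = 0" by (intro allI, rule AI[rule_format]) (intro conjI finC hyp sum0)
  moreover have "id \<in> P" unfolding P_def by (simp add: permutes_id)
  ultimately show False using CM[of id] by simp
qed


section \<open>The lifting map\<close>

definition scl :: "(nat \<Rightarrow> real) \<Rightarrow> nat \<Rightarrow> poly_r \<Rightarrow> poly_r" where
  "scl a n f = (\<lambda>m. f m * (\<Prod>v\<in>{1..n}. inverse (1 + a v) ^ m v))"

definition Psi :: "(nat \<Rightarrow> real) \<Rightarrow> nat \<Rightarrow> poly_r \<Rightarrow> poly_r" where
  "Psi a n f = (\<lambda>m. (pderiv_lin {1..n} a ^^ m 0) (scl a n f) (m(0 := 0)) / fact (m 0))"

lemma sc_upd:
  assumes "s \<in> N" "finite N"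
  shows "(\<Prod>v\<in>N. (b v :: real) ^ (m(s := Suc (m s))) v) = (\<Prod>v\<in>N. b v ^ m v) * b s"
proof -
  have "(\<Prod>v\<in>N. b v ^ (m(s := Suc (m s))) v) = (\<Prod>v\<in>N. b v ^ m v * (if v = s then b v else 1))"
    by (rule prod.cong) auto
  also have "\<dots> = (\<Prod>v\<in>N. b v ^ m v) * (\<Prod>v\<in>N. if v = s then b v else 1)"
    by (rule prod.distrib)
  also have "(\<Prod>v\<in>N. if v = s then b v else 1) = b s" using assms by simp
  finally show ?thesis .
qed

lemma scl_pderiv:
  assumes a1: "\<forall>s\<in>{1..n}. 1 + a s \<noteq> 0"
  shows "pderiv_lin {1..n} (\<lambda>s. (1 + a s) * l s) (scl a n f) = scl a n (pderiv_lin {1..n} l f)"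
proof
  fix m
  let ?sc = "\<Prod>v\<in>{1..n}. inverse (1 + a v) ^ m v"
  have "pderiv_lin {1..n} (\<lambda>s. (1 + a s) * l s) (scl a n f) m =
    (\<Sum>s\<in>{1..n}. l s * real (Suc (m s)) * f (m(s := Suc (m s))) * ?sc)"
    unfolding pderiv_lin_def scl_def
  proof (rule sum.cong[OF refl])
    fix s assume s: "s \<in> {1..n}"
    show "(1 + a s) * l s * real (Suc (m s)) * (f (m(s := Suc (m s))) *
        (\<Prod>v\<in>{1..n}. inverse (1 + a v) ^ (m(s := Suc (m s))) v)) =
      l s * real (Suc (m s)) * f (m(s := Suc (m s))) * ?sc"
    proof -
      have h1: "(1 + a s) * inverse (1 + a s) = 1" using a1 s by simp
      have "(1 + a s) * l s * real (Suc (m s)) * (f (m(s := Suc (m s))) * (?sc * inverse (1 + a s))) =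
        (l s * real (Suc (m s)) * f (m(s := Suc (m s))) * ?sc) * ((1 + a s) * inverse (1 + a s))"
        by (simp only: ac_simps)
      also have "\<dots> = l s * real (Suc (m s)) * f (m(s := Suc (m s))) * ?sc" using h1 by simp
      finally have calc: "(1 + a s) * l s * real (Suc (m s)) * (f (m(s := Suc (m s))) * (?sc * inverse (1 + a s))) =
        l s * real (Suc (m s)) * f (m(s := Suc (m s))) * ?sc" .
      have eqsc: "(\<Prod>v\<in>{1..n}. inverse (1 + a v) ^ (m(s := Suc (m s))) v) = ?sc * inverse (1 + a s)"
        by (rule sc_upd[OF s finite_atLeastAtMost])
      show ?thesis by (subst eqsc) (rule calc)
    qed
  qed
  also have "\<dots> = scl a n (pderiv_lin {1..n} l f) m"
    unfolding scl_def pderiv_lin_def by (simp add: sum_distrib_right)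
  finally show "pderiv_lin {1..n} (\<lambda>s. (1 + a s) * l s) (scl a n f) m = scl a n (pderiv_lin {1..n} l f) m" .
qed

lemma Psi_pderiv:
  "pderiv_lin {1..n} l (Psi a n f) m =
    (pderiv_lin {1..n} a ^^ m 0) (pderiv_lin {1..n} l (scl a n f)) (m(0 := 0)) / fact (m 0)"
proof -
  let ?D = "pderiv_lin {1..n} a"
  let ?m0 = "m(0 := 0)"
  have "pderiv_lin {1..n} l (Psi a n f) m =
      (\<Sum>s\<in>{1..n}. l s * real (Suc (?m0 s)) * (?D ^^ m 0) (scl a n f) (?m0(s := Suc (?m0 s)))) / fact (m 0)"
    unfolding pderiv_lin_def Psi_def sum_divide_distrib
    by (rule sum.cong[OF refl]) (auto simp: fun_upd_twist)
  also have "\<dots> = pderiv_lin {1..n} l ((?D ^^ m 0) (scl a n f)) ?m0 / fact (m 0)"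
    unfolding pderiv_lin_def ..
  also have "\<dots> = (?D ^^ m 0) (pderiv_lin {1..n} l (scl a n f)) ?m0 / fact (m 0)"
    by (simp add: pderiv_lin_pow_commute)
  finally show ?thesis .
qed

lemma Psi_x0:
  "real (Suc (m 0)) * Psi a n f (m(0 := Suc (m 0))) =
    (pderiv_lin {1..n} a ^^ m 0) (pderiv_lin {1..n} a (scl a n f)) (m(0 := 0)) / fact (m 0)"
proof -
  have "real (Suc (m 0)) * Psi a n f (m(0 := Suc (m 0))) =
     real (Suc (m 0)) * ((pderiv_lin {1..n} a ^^ Suc (m 0)) (scl a n f) (m(0 := 0)) / fact (Suc (m 0)))"
    unfolding Psi_def by simp
  also have "\<dots> = (pderiv_lin {1..n} a ^^ Suc (m 0)) (scl a n f) (m(0 := 0)) / fact (m 0)"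
    by (simp add: field_simps del: of_nat_Suc)
  also have "(pderiv_lin {1..n} a ^^ Suc (m 0)) (scl a n f) = (pderiv_lin {1..n} a ^^ m 0) (pderiv_lin {1..n} a (scl a n f))"
    by (simp only: funpow_Suc_right comp_def)
  finally show ?thesis .
qed

lemma pderiv_lin_0n:
  "pderiv_lin {0..n} l g m = l 0 * real (Suc (m 0)) * g (m(0 := Suc (m 0))) + pderiv_lin {1..n} l g m"
proof -
  have "{0..n} = insert 0 {1..n}" by auto
  then show ?thesis unfolding pderiv_lin_def by simp
qed

section \<open>Stresses: non-squarefree monomials\<close>

lemma stress_sqfree:
  fixes \<omega> :: poly_r
  assumes K: "downcl \<Lambda>" and Ksub: "\<forall>\<sigma>\<in>\<Lambda>. \<sigma> \<subseteq> {1..n}"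
    and LI: "\<forall>\<rho>\<in>\<Lambda>. \<forall>c. (\<forall>t\<in>{1..e}. (\<Sum>u\<in>\<rho>. c u * p' u t) = 0) \<longrightarrow> (\<forall>u\<in>\<rho>. c u = 0)"
    and st: "\<forall>t\<in>{1..e}. pderiv_lin {1..n} (\<lambda>v. p' v t) \<omega> = (\<lambda>_. 0)"
    and si: "supp_in \<Lambda> i \<omega>"
  shows "\<omega> m \<noteq> 0 \<Longrightarrow> \<exists>\<sigma>. finite \<sigma> \<and> card \<sigma> = i \<and> mon_supp m \<subseteq> \<sigma> \<and> \<omega> (sqfree \<sigma>) \<noteq> 0"
proof (induction "mon_deg m - card (mon_supp m)" arbitrary: m rule: less_induct)
  case less
  have sm: "mon_supp m \<in> \<Lambda>" "mon_deg m = i" using less.prems si unfolding supp_in_def by auto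
  have finm: "finite (mon_supp m)" using sm K unfolding downcl_def by auto
  show ?case
  proof (cases "\<forall>v. m v \<le> 1")
    case True
    have msq: "m = sqfree (mon_supp m)"
    proof
      fix v have "m v \<le> 1" using True by blast
      then show "m v = sqfree (mon_supp m) v" unfolding sqfree_def mon_supp_def
        by (cases "m v = 0") simp_all
    qed
    have "mon_deg m = (\<Sum>v\<in>mon_supp m. 1)" unfolding mon_deg_def
    proof (rule sum.cong[OF refl])
      fix x assume "x \<in> mon_supp m"
      then have "m x \<noteq> 0" "m x \<le> 1" using True by (auto simp: mon_supp_def)
      then show "m x = 1" by simp
    qed
    then have "card (mon_supp m) = i" using sm by simp
    then show ?thesis using finm less.prems msq by (metis order_refl)
  next
    case False
    then obtain v where "\<not> m v \<le> 1" by blast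
    then have v: "m v \<ge> 2" by simp
    define m' where "m' = m(v := m v - 1)"
    have m'v: "m'(v := Suc (m' v)) = m" using v by (auto simp: m'_def)
    define \<rho> where "\<rho> = mon_supp m"
    have sm': "mon_supp m' = \<rho>" using v by (auto simp: m'_def \<rho>_def mon_supp_def)
    have \<rho>n: "\<rho> \<subseteq> {1..n}" using Ksub sm unfolding \<rho>_def by auto
    have v\<rho>: "v \<in> \<rho>" using v by (auto simp: \<rho>_def mon_supp_def)
    have "\<exists>u\<in>{1..n} - \<rho>. \<omega> (m'(u := Suc (m' u))) \<noteq> 0"
    proof (rule ccontr)
      assume "\<not> ?thesis"
      then have z: "\<forall>u\<in>{1..n} - \<rho>. \<omega> (m'(u := Suc (m' u))) = 0" by auto
      define c where "c = (\<lambda>u. real (Suc (m' u)) * \<omega> (m'(u := Suc (m' u))))"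
      have "\<forall>t\<in>{1..e}. (\<Sum>u\<in>\<rho>. c u * p' u t) = 0"
      proof
        fix t assume t: "t \<in> {1..e}"
        have "0 = pderiv_lin {1..n} (\<lambda>v. p' v t) \<omega> m'" using st t by simp
        also have "\<dots> = (\<Sum>u\<in>{1..n}. c u * p' u t)"
          unfolding pderiv_lin_def c_def by (rule sum.cong) auto
        also have "\<dots> = (\<Sum>u\<in>\<rho>. c u * p' u t)"
          by (rule sum.mono_neutral_right) (use \<rho>n z in \<open>auto simp: c_def\<close>)
        finally show "(\<Sum>u\<in>\<rho>. c u * p' u t) = 0" by simp
      qed
      then have "c v = 0" using LI sm v\<rho> unfolding \<rho>_def by blast
      then show False using less.prems m'v by (simp add: c_def)
    qed
    then obtain u where u: "u \<in> {1..n}" "u \<notin> \<rho>" "\<omega> (m'(u := Suc (m' u))) \<noteq> 0" by auto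
    define m'' where "m'' = m'(u := Suc (m' u))"
    have sm'': "mon_supp m'' = insert u \<rho>" unfolding m''_def mon_supp_upd sm' ..
    have dm'': "mon_deg m'' = i" using u(3) si unfolding supp_in_def m''_def by auto
    have fin\<rho>: "finite \<rho>" using finm \<rho>_def by simp
    have "card \<rho> < mon_deg m"
    proof -
      have "card \<rho> = (\<Sum>w\<in>\<rho>. 1)" by simp
      also have "\<dots> < (\<Sum>w\<in>\<rho>. m w)"
      proof (rule sum_strict_mono_ex1[OF fin\<rho>])
        show "\<forall>w\<in>\<rho>. 1 \<le> m w" by (auto simp: \<rho>_def mon_supp_def)
        show "\<exists>w\<in>\<rho>. 1 < m w" using v v\<rho> by force
      qed
      also have "\<dots> = mon_deg m" unfolding mon_deg_def \<rho>_def ..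
      finally show ?thesis .
    qed
    then have "mon_deg m'' - card (mon_supp m'') < mon_deg m - card (mon_supp m)"
      using sm dm'' u(2) fin\<rho> unfolding sm'' \<rho>_def by simp
    from less.hyps[OF this] u(3) obtain \<sigma> where
      "finite \<sigma>" "card \<sigma> = i" "mon_supp m'' \<subseteq> \<sigma>" "\<omega> (sqfree \<sigma>) \<noteq> 0"
      unfolding m''_def by blast
    then show ?thesis unfolding sm'' \<rho>_def by blast
  qed
qed



lemma sc_nonzero:
  fixes a :: "nat \<Rightarrow> real" and n :: nat
  assumes "\<forall>s\<in>{1..n}. 1 + a s \<noteq> 0"
  shows "(\<Prod>v\<in>{1..n}. inverse (1 + a v :: real) ^ m v) \<noteq> 0"
  using assms by (subst prod_zero_iff) auto

context
  fixes d n :: nat and \<Lambda> :: "nat set set" and p' :: "nat \<Rightarrow> nat \<Rightarrow> real"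
    and a :: "nat \<Rightarrow> real" and F F' :: "real set" and p :: "nat \<Rightarrow> nat \<Rightarrow> real"
  assumes d1: "d \<ge> 1"
    and cx: "simplicial_complex {1..n} \<Lambda>"
    and cd: "cdim1 \<Lambda> = d - 1"
    and aip: "alg_indep \<rat> ({1..n} \<times> {1..d-1}) (\<lambda>(s, t). p' s t)"
    and F'sub: "is_subfield F'"
    and aia: "alg_indep F' {1..n} a"
    and Fsub: "is_subfield F" and F'F: "F' \<subseteq> F" and aF: "\<forall>s\<in>{1..n}. a s \<in> F"
    and pdef: "p = (\<lambda>s t. if s = 0 then (if t = d then -1 else 0)
                    else if t = d then a s else (1 + a s) * p' s t)"
begin

lemma a1: "\<forall>s\<in>{1..n}. 1 + a s \<noteq> 0"
  using one_plus_a[OF aia F'sub] by auto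

lemma Ksub: "\<forall>\<sigma>\<in>\<Lambda>. \<sigma> \<subseteq> {1..n}"
  using cx unfolding simplicial_complex_def by auto

lemma Kne: "\<Lambda> \<noteq> {}"
  using cx unfolding simplicial_complex_def by auto

lemma Kdown: "\<And>\<sigma> \<tau>. \<sigma> \<in> \<Lambda> \<Longrightarrow> \<tau> \<subseteq> \<sigma> \<Longrightarrow> \<tau> \<in> \<Lambda>"
  using cx unfolding simplicial_complex_def by blast

lemma Kfin: "\<And>\<sigma>. \<sigma> \<in> \<Lambda> \<Longrightarrow> finite \<sigma>"
  using Ksub finite_subset by blast

lemma Kno0: "\<And>\<sigma>. \<sigma> \<in> \<Lambda> \<Longrightarrow> 0 \<notin> \<sigma>"
  using Ksub by fastforce

lemma dc: "downcl \<Lambda>"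
  unfolding downcl_def using Kfin Kdown by blast

lemma UK: "\<Union>\<Lambda> = {1..n}"
proof
  show "\<Union>\<Lambda> \<subseteq> {1..n}" using Ksub by blast
  show "{1..n} \<subseteq> \<Union>\<Lambda>"
  proof
    fix v assume "v \<in> {1..n}"
    then have "{v} \<in> \<Lambda>" using cx unfolding simplicial_complex_def by blast
    then show "v \<in> \<Union>\<Lambda>" by blast
  qed
qed

lemma finK: "finite \<Lambda>"
proof -
  have "\<Lambda> \<subseteq> Pow {1..n}" using Ksub by blast
  then show ?thesis using finite_subset by (metis finite_Pow_iff finite_atLeastAtMost)
qed

lemma card_le: "\<And>\<sigma>. \<sigma> \<in> \<Lambda> \<Longrightarrow> card \<sigma> \<le> d - 1"
proof -
  fix \<sigma> assume "\<sigma> \<in> \<Lambda>"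
  then have "card \<sigma> \<le> Max (card ` \<Lambda>)" using finK by simp
  then show "card \<sigma> \<le> d - 1" using cd unfolding cdim1_def by simp
qed

lemma UG: "\<Union>(cone0 \<Lambda>) = {0..n}"
proof
  show "\<Union>(cone0 \<Lambda>) \<subseteq> {0..n}" using Ksub unfolding cone0_def by fastforce
  show "{0..n} \<subseteq> \<Union>(cone0 \<Lambda>)"
  proof
    fix v assume v: "v \<in> {0..n}"
    show "v \<in> \<Union>(cone0 \<Lambda>)"
    proof (cases "v = 0")
      case True
      obtain \<sigma> where "\<sigma> \<in> \<Lambda>" using Kne by blast
      then have "insert 0 \<sigma> \<in> cone0 \<Lambda>" unfolding cone0_def by blast
      then show ?thesis using True by blast
    next
      case False
      then have "v \<in> \<Union>\<Lambda>" using v UK by auto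
      then show ?thesis unfolding cone0_def by blast
    qed
  qed
qed

lemma cdG: "cdim1 (cone0 \<Lambda>) \<le> d"
proof -
  have fin: "finite (cone0 \<Lambda>)" using finK unfolding cone0_def by simp
  have ne: "cone0 \<Lambda> \<noteq> {}" using Kne unfolding cone0_def by blast
  have "\<forall>\<tau>\<in>cone0 \<Lambda>. card \<tau> \<le> d"
  proof
    fix \<tau> assume "\<tau> \<in> cone0 \<Lambda>"
    then consider "\<tau> \<in> \<Lambda>" | \<sigma> where "\<sigma> \<in> \<Lambda>" "\<tau> = insert 0 \<sigma>" unfolding cone0_def by blast
    then show "card \<tau> \<le> d"
    proof cases
      case 1 then show ?thesis using card_le[of \<tau>] by simp
    next
      case 2
      have "card \<tau> \<le> Suc (card \<sigma>)" using 2 Kfin[OF 2(1)] by (simp add: card_insert_if)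
      then show ?thesis using card_le[OF 2(1)] d1 by simp
    qed
  qed
  then show ?thesis unfolding cdim1_def using fin ne by simp
qed

lemma LI: "\<forall>\<rho>\<in>\<Lambda>. \<forall>c. (\<forall>t\<in>{1..d-1}. (\<Sum>u\<in>\<rho>. c u * p' u t) = 0) \<longrightarrow> (\<forall>u\<in>\<rho>. c u = 0)"
proof (intro ballI allI impI)
  fix \<rho> c u assume "\<rho> \<in> \<Lambda>" "\<forall>t\<in>{1..d-1}. (\<Sum>u\<in>\<rho>. c u * p' u t) = 0" "u \<in> \<rho>"
  then show "c u = 0" using lin_indep_faces[OF aip, of \<rho> c] Ksub card_le by blast
qed

lemma stress_unpack:
  assumes "\<omega> \<in> lin_stresses \<Lambda> p' F' i"
  shows "\<forall>m. \<omega> m \<in> F'" "supp_in \<Lambda> i \<omega>"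
    "\<forall>t\<in>{1..d-1}. pderiv_lin {1..n} (\<lambda>v. p' v t) \<omega> = (\<lambda>_. 0)"
  using assms unfolding lin_stresses_def supp_in_def cd UK by auto

lemma supp_scl: "supp_in \<Lambda> i \<omega> \<Longrightarrow> supp_in \<Lambda> i (scl a n \<omega>)"
  unfolding supp_in_def scl_def by auto

lemma Psi_add: "Psi a n (\<lambda>m. f m + g m) = (\<lambda>m. Psi a n f m + Psi a n g m)"
proof -
  have "scl a n (\<lambda>m. f m + g m) = (\<lambda>m. scl a n f m + scl a n g m)"
    by (auto simp: scl_def algebra_simps)
  then show ?thesis by (simp add: Psi_def pderiv_lin_pow_add add_divide_distrib)
qed

lemma Psi_smult: "Psi a n (\<lambda>m. c * f m) = (\<lambda>m. c * Psi a n f m)"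
proof -
  have "scl a n (\<lambda>m. c * f m) = (\<lambda>m. c * scl a n f m)"
    by (auto simp: scl_def algebra_simps)
  then show ?thesis by (simp add: Psi_def pderiv_lin_pow_smult)
qed

lemma Psi_der: "Psi a n (pderiv_lin {1..n} (\<lambda>_. 1) \<omega>) = pderiv_lin {0..n} (\<lambda>_. 1) (Psi a n \<omega>)"
proof
  fix m :: "nat \<Rightarrow> nat"
  let ?D = "pderiv_lin {1..n} a"
  let ?m0 = "m(0 := 0)"
  let ?k = "m 0"
  have "pderiv_lin {0..n} (\<lambda>_. 1) (Psi a n \<omega>) m =
      (?D ^^ ?k) (?D (scl a n \<omega>)) ?m0 / fact ?k + (?D ^^ ?k) (pderiv_lin {1..n} (\<lambda>_. 1) (scl a n \<omega>)) ?m0 / fact ?k"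
    unfolding pderiv_lin_0n Psi_pderiv using Psi_x0[of m a n \<omega>] by simp
  also have "\<dots> = (?D ^^ ?k) (\<lambda>m. ?D (scl a n \<omega>) m + pderiv_lin {1..n} (\<lambda>_. 1) (scl a n \<omega>) m) ?m0 / fact ?k"
    by (simp add: pderiv_lin_pow_add add_divide_distrib)
  also have "(\<lambda>m. ?D (scl a n \<omega>) m + pderiv_lin {1..n} (\<lambda>_. 1) (scl a n \<omega>) m) =
      pderiv_lin {1..n} (\<lambda>s. (1 + a s) * 1) (scl a n \<omega>)"
    unfolding pderiv_lin_addl by (simp add: add.commute)
  also have "\<dots> = scl a n (pderiv_lin {1..n} (\<lambda>_. 1) \<omega>)"
    by (rule scl_pderiv[OF a1])
  finally have calc: "pderiv_lin {0..n} (\<lambda>_. 1) (Psi a n \<omega>) m =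
    (?D ^^ ?k) (scl a n (pderiv_lin {1..n} (\<lambda>_. 1) \<omega>)) ?m0 / fact ?k" .
  have eq2: "Psi a n (pderiv_lin {1..n} (\<lambda>_. 1) \<omega>) m =
    (?D ^^ ?k) (scl a n (pderiv_lin {1..n} (\<lambda>_. 1) \<omega>)) ?m0 / fact ?k"
    unfolding Psi_def by (rule refl)
  show "Psi a n (pderiv_lin {1..n} (\<lambda>_. 1) \<omega>) m = pderiv_lin {0..n} (\<lambda>_. 1) (Psi a n \<omega>) m"
    by (rule trans[OF eq2 calc[symmetric]])
qed

lemma pv: "p s t = (if s = 0 then (if t = d then -1 else 0) else if t = d then a s else (1 + a s) * p' s t)"
  using pdef by simp

lemma Psi_stress:
  assumes om: "\<omega> \<in> lin_stresses \<Lambda> p' F' i"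
  shows "Psi a n \<omega> \<in> lin_stresses (cone0 \<Lambda>) p F i"
proof -
  note u = stress_unpack[OF om]
  let ?D = "pderiv_lin {1..n} a"
  have sclF: "\<And>m. scl a n \<omega> m \<in> F"
    unfolding scl_def
    by (intro subfield_mult[OF Fsub] subfield_prod[OF Fsub] subfield_power[OF Fsub] subfield_inverse[OF Fsub]
        subfield_add[OF Fsub] subfield_one[OF Fsub]) (use u(1) F'F aF in auto)
  have A: "\<forall>m. Psi a n \<omega> m \<in> F"
  proof
    fix m :: "nat \<Rightarrow> nat"
    have "(?D ^^ m 0) (scl a n \<omega>) (m(0 := 0)) \<in> F"
      by (rule pderiv_lin_pow_in_field[OF Fsub sclF]) (use aF in auto)
    moreover have "(fact (m 0) :: real) \<in> F" using subfield_nat[OF Fsub, of "fact (m 0)"] by simp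
    ultimately show "Psi a n \<omega> m \<in> F" unfolding Psi_def by (rule subfield_divide[OF Fsub])
  qed
  have B: "\<forall>m. Psi a n \<omega> m \<noteq> 0 \<longrightarrow> mon_supp m \<in> cone0 \<Lambda> \<and> mon_deg m = i"
  proof (intro allI impI)
    fix m :: "nat \<Rightarrow> nat"
    assume nz: "Psi a n \<omega> m \<noteq> 0"
    define k where "k = m 0"
    define m0 where "m0 = m(0 := 0)"
    have nz': "(?D ^^ k) (scl a n \<omega>) m0 \<noteq> 0" using nz unfolding Psi_def k_def m0_def by auto
    note sp = supp_in_pow[OF dc supp_scl[OF u(2)], of k "{1..n}" a]
    have ki: "k \<le> i" using sp nz' by (metis not_le)
    have m0s: "mon_supp m0 \<in> \<Lambda>" "mon_deg m0 = i - k" using sp nz' unfolding supp_in_def by auto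
    have no0: "0 \<notin> mon_supp m0" unfolding m0_def mon_supp_def by simp
    have finm0: "finite (mon_supp m0)" using Kfin m0s by blast
    have suppm: "mon_supp m = (if k = 0 then mon_supp m0 else insert 0 (mon_supp m0))"
      unfolding k_def m0_def mon_supp_def by (auto; metis gr0I less_irrefl)
    have "mon_supp m \<in> cone0 \<Lambda>" unfolding suppm cone0_def using m0s by auto
    moreover have "mon_deg m = i"
    proof -
      have "mon_deg m = (\<Sum>v\<in>insert 0 (mon_supp m0). m v)"
        by (rule mon_deg_sum) (use finm0 suppm in auto)
      also have "\<dots> = k + (\<Sum>v\<in>mon_supp m0. m v)" using no0 finm0 k_def by simp
      also have "(\<Sum>v\<in>mon_supp m0. m v) = (\<Sum>v\<in>mon_supp m0. m0 v)"
        by (rule sum.cong) (use no0 in \<open>auto simp: m0_def\<close>)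
      also have "\<dots> = mon_deg m0" unfolding mon_deg_def ..
      finally show ?thesis using m0s ki by simp
    qed
    ultimately show "mon_supp m \<in> cone0 \<Lambda> \<and> mon_deg m = i" by simp
  qed
  have C: "\<forall>t\<in>{1..cdim1 (cone0 \<Lambda>)}. pderiv_lin (\<Union>(cone0 \<Lambda>)) (\<lambda>v. p v t) (Psi a n \<omega>) = (\<lambda>_. 0)"
  proof
    fix t assume "t \<in> {1..cdim1 (cone0 \<Lambda>)}"
    then have t: "1 \<le> t" "t \<le> d" using cdG by auto
    show "pderiv_lin (\<Union>(cone0 \<Lambda>)) (\<lambda>v. p v t) (Psi a n \<omega>) = (\<lambda>_. 0)"
    proof
      fix m :: "nat \<Rightarrow> nat"
      let ?m0 = "m(0 := 0)"
      let ?k = "m 0"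
      show "pderiv_lin (\<Union>(cone0 \<Lambda>)) (\<lambda>v. p v t) (Psi a n \<omega>) m = 0"
      proof (cases "t = d")
        case True
        have c1: "pderiv_lin {1..n} (\<lambda>v. p v t) (Psi a n \<omega>) = pderiv_lin {1..n} a (Psi a n \<omega>)"
          by (rule pderiv_lin_cong) (simp add: pv True)
        have "pderiv_lin (\<Union>(cone0 \<Lambda>)) (\<lambda>v. p v t) (Psi a n \<omega>) m =
          - (real (Suc (m 0)) * Psi a n \<omega> (m(0 := Suc (m 0)))) + pderiv_lin {1..n} a (Psi a n \<omega>) m"
          unfolding UG pderiv_lin_0n c1 by (simp add: pv True algebra_simps)
        also have "\<dots> = 0" unfolding Psi_x0 Psi_pderiv by simp
        finally show ?thesis .
      next
        case False
        have c1: "pderiv_lin {1..n} (\<lambda>v. p v t) (Psi a n \<omega>) =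
            pderiv_lin {1..n} (\<lambda>s. (1 + a s) * p' s t) (Psi a n \<omega>)"
          by (rule pderiv_lin_cong) (simp add: pv False)
        have t': "t \<in> {1..d-1}" using t False by auto
        have "pderiv_lin (\<Union>(cone0 \<Lambda>)) (\<lambda>v. p v t) (Psi a n \<omega>) m =
          pderiv_lin {1..n} (\<lambda>s. (1 + a s) * p' s t) (Psi a n \<omega>) m"
          unfolding UG pderiv_lin_0n c1 by (simp add: pv False)
        also have "\<dots> = (?D ^^ ?k) (scl a n (pderiv_lin {1..n} (\<lambda>v. p' v t) \<omega>)) ?m0 / fact ?k"
          unfolding Psi_pderiv scl_pderiv[OF a1] ..
        also have "\<dots> = 0" using u(3) t' by (simp add: scl_def pderiv_lin_pow_zero)
        finally show ?thesis .
      qed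
    qed
  qed
  show ?thesis unfolding lin_stresses_def using A B C by blast
qed

lemma sqfree_insert: "s \<notin> \<rho> \<Longrightarrow> (sqfree \<rho>)(s := Suc (sqfree \<rho> s)) = sqfree (insert s \<rho>)"
  by (auto simp: sqfree_def)

lemma sqfree_in: "s \<in> \<rho> \<Longrightarrow> mon_supp ((sqfree \<rho>)(s := Suc (sqfree \<rho> s))) = \<rho>"
  unfolding mon_supp_upd mon_supp_sqfree by auto

lemma om_face:
  assumes om: "\<omega> \<in> lin_stresses \<Lambda> p' F' i" and nz: "\<omega> (sqfree \<sigma>) \<noteq> 0"
  shows "\<sigma> \<in> \<Lambda>"
  using stress_unpack(2)[OF om, unfolded supp_in_def, rule_format, OF nz] mon_supp_sqfree by simp

lemma keyK:
  assumes om: "\<omega> \<in> lin_stresses \<Lambda> p' F' i"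
    and \<rho>: "finite \<rho>" "0 \<notin> \<rho>" "card \<rho> = i - 1" "1 \<le> i"
  shows "pderiv_lin {1..n} a (scl a n \<omega>) (sqfree \<rho>) \<noteq> 0 \<longleftrightarrow>
    (\<exists>s. s \<notin> \<rho> \<and> \<omega> (sqfree (insert s \<rho>)) \<noteq> 0)"
proof -
  note u = stress_unpack[OF om]
  define m where "m = sqfree \<rho>"
  define sc where "sc = (\<Prod>v\<in>{1..n}. inverse (1 + a v) ^ m v)"
  define c where "c = (\<lambda>s. real (Suc (m s)) * \<omega> (m(s := Suc (m s))))"
  have sc0: "sc \<noteq> 0" unfolding sc_def using sc_nonzero[OF a1] .
  have Dform: "pderiv_lin {1..n} a (scl a n \<omega>) m = sc * (\<Sum>s\<in>{1..n}. c s * (a s / (1 + a s)))"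
    unfolding pderiv_lin_def scl_def sum_distrib_left
  proof (rule sum.cong[OF refl])
    fix s assume s: "s \<in> {1..n}"
    show "a s * real (Suc (m s)) * (\<omega> (m(s := Suc (m s))) *
        (\<Prod>v\<in>{1..n}. inverse (1 + a v) ^ (m(s := Suc (m s))) v)) =
      sc * (c s * (a s / (1 + a s)))"
    proof -
      have eqsc: "(\<Prod>v\<in>{1..n}. inverse (1 + a v) ^ (m(s := Suc (m s))) v) = sc * inverse (1 + a s)"
        unfolding sc_def by (rule sc_upd[OF s finite_atLeastAtMost])
      show ?thesis by (subst eqsc) (simp add: c_def divide_inverse mult_ac)
    qed
  qed
  have cF: "\<forall>s\<in>{1..n}. c s \<in> F'"
  proof
    fix s assume "s \<in> {1..n}"
    have "real (Suc (m s)) \<in> F'" by (rule subfield_nat[OF F'sub])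
    then show "c s \<in> F'" unfolding c_def using u(1) by (intro subfield_mult[OF F'sub]) auto
  qed
  show ?thesis
  proof
    assume "pderiv_lin {1..n} a (scl a n \<omega>) (sqfree \<rho>) \<noteq> 0"
    then have "(\<Sum>s\<in>{1..n}. c s * (a s / (1 + a s))) \<noteq> 0" using Dform m_def by auto
    then have "\<exists>s\<in>{1..n}. c s \<noteq> 0"
      by (metis (mono_tags, lifting) mult_eq_0_iff sum.neutral)
    then obtain s where s: "s \<in> {1..n}" "\<omega> (m(s := Suc (m s))) \<noteq> 0" unfolding c_def by auto
    show "\<exists>s. s \<notin> \<rho> \<and> \<omega> (sqfree (insert s \<rho>)) \<noteq> 0"
    proof (cases "s \<in> \<rho>")
      case False
      then show ?thesis using s sqfree_insert[OF False] m_def by auto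
    next
      case True
      obtain \<sigma> where \<sigma>: "finite \<sigma>" "card \<sigma> = i" "mon_supp (m(s := Suc (m s))) \<subseteq> \<sigma>" "\<omega> (sqfree \<sigma>) \<noteq> 0"
        using stress_sqfree[where \<Lambda>=\<Lambda> and n=n and e="d-1" and p'=p' and \<omega>=\<omega> and i=i, OF dc Ksub LI u(3) u(2) s(2)] by blast
      have \<rho>\<sigma>: "\<rho> \<subseteq> \<sigma>" using \<sigma>(3) sqfree_in[OF True] m_def by simp
      have "card \<rho> < card \<sigma>" using \<rho>(3,4) \<sigma>(2) by simp
      then obtain s' where s': "s' \<in> \<sigma>" "s' \<notin> \<rho>" using \<rho>\<sigma> by (metis card_mono \<sigma>(1) not_le subsetI subset_antisym)
      have "insert s' \<rho> \<subseteq> \<sigma>" using s' \<rho>\<sigma> by auto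
      moreover have "card (insert s' \<rho>) = card \<sigma>" using s' \<rho>(1,3,4) \<sigma>(2) by simp
      ultimately have "insert s' \<rho> = \<sigma>" using card_subset_eq[OF \<sigma>(1)] by blast
      then show ?thesis using s' \<sigma>(4) by auto
    qed
  next
    assume "\<exists>s. s \<notin> \<rho> \<and> \<omega> (sqfree (insert s \<rho>)) \<noteq> 0"
    then obtain s0 where s0: "s0 \<notin> \<rho>" "\<omega> (sqfree (insert s0 \<rho>)) \<noteq> 0" by blast
    have "insert s0 \<rho> \<in> \<Lambda>" using om_face[OF om s0(2)] .
    then have s0n: "s0 \<in> {1..n}" using Ksub by blast
    have "c s0 \<noteq> 0" unfolding c_def m_def sqfree_insert[OF s0(1)] using s0(2) by simp
    then have "(\<Sum>s\<in>{1..n}. c s * (a s / (1 + a s))) \<noteq> 0"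
      using a_indep[OF aia F'sub finite_atLeastAtMost cF a1] s0n by blast
    then show "pderiv_lin {1..n} a (scl a n \<omega>) (sqfree \<rho>) \<noteq> 0" using Dform sc0 m_def by simp
  qed
qed

lemma Psi_sq1:
  assumes "0 \<notin> \<sigma>"
  shows "Psi a n \<omega> (sqfree \<sigma>) = \<omega> (sqfree \<sigma>) * (\<Prod>v\<in>{1..n}. inverse (1 + a v) ^ sqfree \<sigma> v)"
proof -
  have "(sqfree \<sigma>) 0 = 0" "(sqfree \<sigma>)(0 := 0) = sqfree \<sigma>" using assms by (auto simp: sqfree_def)
  then show ?thesis unfolding Psi_def scl_def by simp
qed

lemma Psi_sq2:
  assumes "0 \<in> \<sigma>"
  shows "Psi a n \<omega> (sqfree \<sigma>) = pderiv_lin {1..n} a (scl a n \<omega>) (sqfree (\<sigma> - {0}))"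
proof -
  have "(sqfree \<sigma>) 0 = 1" "(sqfree \<sigma>)(0 := 0) = sqfree (\<sigma> - {0})" using assms by (auto simp: sqfree_def)
  then show ?thesis unfolding Psi_def by simp
qed

lemma Psi_supp:
  assumes om: "\<omega> \<in> lin_stresses \<Lambda> p' F' i"
  shows "stress_supp i (Psi a n \<omega>) = skel (int i - 1) (cone0 (stress_supp i \<omega>))"
proof
  let ?SS = "stress_supp i \<omega>"
  show "stress_supp i (Psi a n \<omega>) \<subseteq> skel (int i - 1) (cone0 ?SS)"
  proof
    fix \<tau> assume "\<tau> \<in> stress_supp i (Psi a n \<omega>)"
    then obtain \<sigma> where \<sigma>: "finite \<sigma>" "card \<sigma> = i" "Psi a n \<omega> (sqfree \<sigma>) \<noteq> 0" "\<tau> \<subseteq> \<sigma>"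
      unfolding stress_supp_def by blast
    have ct: "card \<tau> \<le> i" using card_mono[OF \<sigma>(1,4)] \<sigma>(2) by simp
    have "\<tau> \<in> cone0 ?SS"
    proof (cases "0 \<in> \<sigma>")
      case False
      have "\<omega> (sqfree \<sigma>) \<noteq> 0" using \<sigma>(3) Psi_sq1[OF False] by simp
      then have "\<tau> \<in> ?SS" unfolding stress_supp_def using \<sigma> by blast
      then show ?thesis unfolding cone0_def by blast
    next
      case True
      define \<rho> where "\<rho> = \<sigma> - {0}"
      have \<rho>: "finite \<rho>" "0 \<notin> \<rho>" "card \<rho> = i - 1" "1 \<le> i"
        using \<sigma>(1,2) True by (auto simp: \<rho>_def card_gt_0_iff Suc_le_eq)
      have "pderiv_lin {1..n} a (scl a n \<omega>) (sqfree \<rho>) \<noteq> 0"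
        using \<sigma>(3) Psi_sq2[OF True] \<rho>_def by simp
      then obtain s where s: "s \<notin> \<rho>" "\<omega> (sqfree (insert s \<rho>)) \<noteq> 0" using keyK[OF om \<rho>] by blast
      have "card (insert s \<rho>) = i" using s(1) \<rho> by simp
      then have "\<tau> - {0} \<in> ?SS" unfolding stress_supp_def using s \<rho>(1) \<sigma>(4) \<rho>_def
        by (intro CollectI exI[of _ "insert s \<rho>"]) auto
      then show ?thesis unfolding cone0_def
        by (cases "0 \<in> \<tau>") (auto intro: exI[of _ "\<tau> - {0}"] simp: insert_absorb)
    qed
    then show "\<tau> \<in> skel (int i - 1) (cone0 ?SS)" unfolding skel_def using ct by simp
  qed
  show "skel (int i - 1) (cone0 ?SS) \<subseteq> stress_supp i (Psi a n \<omega>)"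
  proof
    fix \<tau> assume "\<tau> \<in> skel (int i - 1) (cone0 ?SS)"
    then have \<tau>: "\<tau> \<in> cone0 ?SS" "card \<tau> \<le> i" unfolding skel_def by auto
    from \<tau>(1) consider "\<tau> \<in> ?SS" | \<rho>0 where "\<rho>0 \<in> ?SS" "\<tau> = insert 0 \<rho>0" unfolding cone0_def by blast
    then show "\<tau> \<in> stress_supp i (Psi a n \<omega>)"
    proof cases
      case 1
      then obtain \<sigma> where \<sigma>: "finite \<sigma>" "card \<sigma> = i" "\<omega> (sqfree \<sigma>) \<noteq> 0" "\<tau> \<subseteq> \<sigma>"
        unfolding stress_supp_def by blast
      have "0 \<notin> \<sigma>" using Kno0 om_face[OF om \<sigma>(3)] by blast
      then have "Psi a n \<omega> (sqfree \<sigma>) \<noteq> 0" using Psi_sq1 \<sigma>(3) sc_nonzero[OF a1] by simp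
      then show ?thesis unfolding stress_supp_def using \<sigma> by blast
    next
      case 2
      then obtain \<sigma> where \<sigma>: "finite \<sigma>" "card \<sigma> = i" "\<omega> (sqfree \<sigma>) \<noteq> 0" "\<rho>0 \<subseteq> \<sigma>"
        unfolding stress_supp_def by blast
      have no0: "0 \<notin> \<sigma>" using Kno0 om_face[OF om \<sigma>(3)] by blast
      have fin0: "finite \<rho>0" using finite_subset[OF \<sigma>(4,1)] .
      have "0 \<notin> \<rho>0" using no0 \<sigma>(4) by auto
      then have c0: "card \<tau> = Suc (card \<rho>0)" using 2(2) fin0 by simp
      then have i1: "1 \<le> i" and c0': "card \<rho>0 \<le> i - 1" using \<tau>(2) by auto
      obtain \<rho> where \<rho>: "\<rho>0 \<subseteq> \<rho>" "\<rho> \<subseteq> \<sigma>" "card \<rho> = i - 1"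
        using exists_subset_between[OF c0' _ \<sigma>(4,1)] \<sigma>(2) by auto
      have fin\<rho>: "finite \<rho>" using finite_subset[OF \<rho>(2) \<sigma>(1)] .
      have no0\<rho>: "0 \<notin> \<rho>" using no0 \<rho>(2) by auto
      have "card \<rho> < card \<sigma>" using \<rho>(3) \<sigma>(2) i1 by simp
      then obtain s where s: "s \<in> \<sigma>" "s \<notin> \<rho>" using \<rho>(2) by (metis card_mono \<sigma>(1) not_le subsetI subset_antisym)
      have "insert s \<rho> \<subseteq> \<sigma>" using s \<rho>(2) by auto
      moreover have "card (insert s \<rho>) = card \<sigma>" using s fin\<rho> \<rho>(3) \<sigma>(2) i1 by simp
      ultimately have "insert s \<rho> = \<sigma>" using card_subset_eq[OF \<sigma>(1)] by blast
      then have "pderiv_lin {1..n} a (scl a n \<omega>) (sqfree \<rho>) \<noteq> 0"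
        using keyK[OF om fin\<rho> no0\<rho> \<rho>(3) i1] s \<sigma>(3) by blast
      moreover have "insert 0 \<rho> - {0} = \<rho>" using no0\<rho> by auto
      ultimately have "Psi a n \<omega> (sqfree (insert 0 \<rho>)) \<noteq> 0" using Psi_sq2[of "insert 0 \<rho>"] by simp
      moreover have "card (insert 0 \<rho>) = i" using fin\<rho> no0\<rho> \<rho>(3) i1 by simp
      moreover have "\<tau> \<subseteq> insert 0 \<rho>" using 2(2) \<rho>(1) by auto
      ultimately show ?thesis unfolding stress_supp_def using fin\<rho> by blast
    qed
  qed
qed

end

theorem lemma3p1:
  fixes d n :: nat and \<Lambda> :: "nat set set" and p' :: "nat \<Rightarrow> nat \<Rightarrow> real"
    and a :: "nat \<Rightarrow> real" and F F' :: "real set" and p :: "nat \<Rightarrow> nat \<Rightarrow> real"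
  assumes "d \<ge> 1"
    and "simplicial_complex {1..n} \<Lambda>"
    and "cdim1 \<Lambda> = d - 1"
    and "alg_indep \<rat> ({1..n} \<times> {1..d-1}) (\<lambda>(s, t). p' s t)"
    and "F' = field_gen (\<rat> \<union> {p' s t | s t. s \<in> {1..n} \<and> t \<in> {1..d-1}})"
    and "alg_indep F' {1..n} a"
    and "is_subfield F" and "field_gen (F' \<union> a ` {1..n}) \<subseteq> F"
    and "p = (\<lambda>s t. if s = 0 then (if t = d then -1 else 0)
                    else if t = d then a s else (1 + a s) * p' s t)"
  shows "\<exists>\<psi> :: nat \<Rightarrow> poly_r \<Rightarrow> poly_r.
    \<forall>i \<le> d - 1.
      (\<forall>\<omega> \<in> lin_stresses \<Lambda> p' F' i. \<psi> i \<omega> \<in> lin_stresses (cone0 \<Lambda>) p F i) \<and>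
      (\<forall>\<omega>1 \<in> lin_stresses \<Lambda> p' F' i. \<forall>\<omega>2 \<in> lin_stresses \<Lambda> p' F' i.
          \<psi> i (\<lambda>m. \<omega>1 m + \<omega>2 m) = (\<lambda>m. \<psi> i \<omega>1 m + \<psi> i \<omega>2 m)) \<and>
      (\<forall>c \<in> F'. \<forall>\<omega> \<in> lin_stresses \<Lambda> p' F' i.
          \<psi> i (\<lambda>m. c * \<omega> m) = (\<lambda>m. c * \<psi> i \<omega> m)) \<and>
      (\<forall>\<omega> \<in> lin_stresses \<Lambda> p' F' i.
          stress_supp i (\<psi> i \<omega>) = skel (int i - 1) (cone0 (stress_supp i \<omega>))) \<and>
      (i \<ge> 1 \<longrightarrow> (\<forall>\<omega> \<in> lin_stresses \<Lambda> p' F' i.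
          \<psi> (i - 1) (pderiv_lin {1..n} (\<lambda>_. 1) \<omega>) =
          pderiv_lin {0..n} (\<lambda>_. 1) (\<psi> i \<omega>)))"
proof -
  have F'sub: "is_subfield F'" using assms(5) field_gen_subfield by simp
  have sub: "F' \<union> a ` {1..n} \<subseteq> F" using field_gen_sup[of "F' \<union> a ` {1..n}"] assms(8) by blast
  then have F'F: "F' \<subseteq> F" and aF: "\<forall>s\<in>{1..n}. a s \<in> F" by auto
  note hyps = assms(1) assms(2) assms(3) assms(4) F'sub assms(6) assms(7) F'F aF assms(9)
  have X: "\<And>i \<omega>. \<omega> \<in> lin_stresses \<Lambda> p' F' i \<Longrightarrow> Psi a n \<omega> \<in> lin_stresses (cone0 \<Lambda>) p F i"
    using Psi_stress[OF hyps] by blast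
  have S: "\<And>i \<omega>. \<omega> \<in> lin_stresses \<Lambda> p' F' i \<Longrightarrow>
      stress_supp i (Psi a n \<omega>) = skel (int i - 1) (cone0 (stress_supp i \<omega>))"
    using Psi_supp[OF hyps] by blast
  have A: "\<And>f g. Psi a n (\<lambda>m. f m + g m) = (\<lambda>m. Psi a n f m + Psi a n g m)"
    using Psi_add[OF hyps] by blast
  have M: "\<And>c f. Psi a n (\<lambda>m. c * f m) = (\<lambda>m. c * Psi a n f m)"
    using Psi_smult[OF hyps] by blast
  have D: "\<And>\<omega>. Psi a n (pderiv_lin {1..n} (\<lambda>_. 1) \<omega>) = pderiv_lin {0..n} (\<lambda>_. 1) (Psi a n \<omega>)"
    using Psi_der[OF hyps] by blast
  show ?thesis
    by (rule exI[of _ "\<lambda>i. Psi a n"]) (simp add: X S A M D D[simplified])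
qed

end
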